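(* Let $n, k \in \mathbb{N}$, $m \in \mathbb{Z}$ with $0 \le m \le n-1$, and let $F \colon \mathcal{K}_k^n \to \mathbb{Z}^{n-1}$ be such that $\|F(K') - F(K)\|_\infty \le 1$ for all $K, K' \in \mathcal{K}_k^n$ with $\dim(K \cap K') \ge m$. Then $\|F(K') - F(K)\|_\infty \le m+1$ for all $K, K' \in \mathcal{K}_k^n$ with $K \cap K' \ne \emptyset$.
   Context: $\mathcal{K}_k^n = \{\prod_{s=1}^n [\frac{i_s-1}{k}, \frac{i_s}{k}] : i_s \in \{1,\dots,k\}\}$ is the division of $[0,1]^n$ into $k^n$ closed cubes; $\dim$ is topological dimension (the dimension of the common face of two cubes); $\mathbb{Z}^0=\{0\}$. *)

theory Defs
  imports "HOL-Analysis.Analysis"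
begin

text \<open>The cube of the k-division of [0,1]^n with multi-index i (entries in 1..k).
  The dimension n is CARD('n).\<close>
definition grid_cube :: "nat \<Rightarrow> ('n::finite \<Rightarrow> nat) \<Rightarrow> (real^'n) set" where
  "grid_cube k i = {x. \<forall>s. (real (i s) - 1) / real k \<le> x $ s \<and> x $ s \<le> real (i s) / real k}"

definition grid_cubes :: "nat \<Rightarrow> (real^'n::finite) set set" where
  "grid_cubes k = {grid_cube k i | i. \<forall>s. 1 \<le> i s \<and> i s \<le> k}"

end

theory Submission
  imports Defs
begin


lemma chain:
  fixes g :: "('n::finite \<Rightarrow> nat) \<Rightarrow> int" and V :: "('n \<Rightarrow> nat) \<Rightarrow> bool"
  assumes step: "\<And>i i'. V i \<Longrightarrow> V i' \<Longrightarrow> (\<forall>s. i' s \<le> i s + 1 \<and> i s \<le> i' s + 1) \<Longrightarrow>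
      card {s. i s \<noteq> i' s} \<le> N \<Longrightarrow> \<bar>g i' - g i\<bar> \<le> 1"
    and N: "N \<ge> 1"
    and Vmix: "\<And>i i' G. V i \<Longrightarrow> V i' \<Longrightarrow> V (\<lambda>s. if s \<in> G then i' s else i s)"
  shows "V i \<Longrightarrow> V i' \<Longrightarrow> (\<forall>s. i' s \<le> i s + 1 \<and> i s \<le> i' s + 1) \<Longrightarrow>
      card {s. i s \<noteq> i' s} \<le> (t+1)*N \<Longrightarrow> \<bar>g i' - g i\<bar> \<le> int t + 1"
proof (induction t arbitrary: i i')
  case 0
  then show ?case using step by auto
next
  case (Suc t)
  show ?case
  proof (cases "card {s. i s \<noteq> i' s} \<le> N")
    case True
    then show ?thesis using step Suc.prems by fastforce
  next
    case False
    define D where "D = {s. i s \<noteq> i' s}"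
    have ND: "N \<le> card D" using False unfolding D_def by simp
    obtain G where G: "G \<subseteq> D" "card G = N"
      using obtain_subset_with_card_n[OF ND] by blast
    define i'' where "i'' = (\<lambda>s. if s \<in> G then i' s else i s)"
    have V'': "V i''" unfolding i''_def using Vmix Suc.prems by blast
    have a1: "\<forall>s. i'' s \<le> i s + 1 \<and> i s \<le> i'' s + 1" "\<forall>s. i' s \<le> i'' s + 1 \<and> i'' s \<le> i' s + 1"
      using Suc.prems unfolding i''_def by auto
    have "{s. i s \<noteq> i'' s} = G" using G unfolding i''_def D_def by auto
    hence c1: "card {s. i s \<noteq> i'' s} \<le> N" using G by simp
    have e2: "{s. i'' s \<noteq> i' s} = D - G" unfolding i''_def D_def by auto
    have "card (D - G) = card D - N" using G by (simp add: card_Diff_subset finite_subset)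
    hence c2: "card {s. i'' s \<noteq> i' s} \<le> (t+1)*N" using e2 Suc.prems(4) D_def by simp
    have h1: "\<bar>g i'' - g i\<bar> \<le> 1" using step[OF Suc.prems(1) V'' a1(1) c1] .
    have h2: "\<bar>g i' - g i''\<bar> \<le> int t + 1" using Suc.IH[OF V'' Suc.prems(2) a1(2) c2] .
    show ?thesis using h1 h2 by simp
  qed
qed

lemma cube_adj:
  assumes "k \<ge> 1" "grid_cube k i \<inter> grid_cube k i' \<noteq> {}"
  shows "i' s \<le> i s + 1 \<and> i s \<le> i' s + 1"
proof -
  obtain x where x: "x \<in> grid_cube k i" "x \<in> grid_cube k i'" using assms by blast
  have kp: "real k > 0" using assms by simp
  have "(real (i s) - 1) / real k \<le> real (i' s) / real k"
       "(real (i' s) - 1) / real k \<le> real (i s) / real k"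
    using x unfolding grid_cube_def by (auto intro: order_trans)
  hence "real (i s) - 1 \<le> real (i' s)" "real (i' s) - 1 \<le> real (i s)"
    using kp by (simp_all add: divide_right_mono_neg divide_le_cancel)
  thus ?thesis by linarith
qed

lemma cube_affdim:
  fixes i i' :: "'n::finite \<Rightarrow> nat"
  assumes k: "k \<ge> 1" and adj: "\<forall>s. i' s \<le> i s + 1 \<and> i s \<le> i' s + 1"
  shows "aff_dim (grid_cube k i \<inter> grid_cube k i') \<ge> int (card {s. i s = i' s})"
proof -
  let ?S = "grid_cube k i \<inter> grid_cube k i'"
  define E where "E = {s. i s = i' s}"
  define p :: "real^'n" where "p = (\<chi> s. (real (max (i s) (i' s)) - 1) / real k)"
  have kp: "real k > 0" using k by simp
  have inS: "p + (1 / real k) *\<^sub>R axis s 1 \<in> ?S" if "s \<in> E" for s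
  proof -
    have "(real (j t) - 1) / real k \<le> (p + (1 / real k) *\<^sub>R axis s 1) $ t \<and>
          (p + (1 / real k) *\<^sub>R axis s 1) $ t \<le> real (j t) / real k"
      if "j = i \<or> j = i'" for j t
    proof (cases "t = s")
      case True
      then show ?thesis using that \<open>s \<in> E\<close> kp unfolding p_def E_def
        by (auto simp: axis_def divide_simps max_def)
    next
      case False
      have "j t \<le> max (i t) (i' t)" "max (i t) (i' t) \<le> j t + 1" using that adj[rule_format, of t] by auto
      then show ?thesis using False kp unfolding p_def
        by (auto simp: axis_def divide_simps)
    qed
    thus ?thesis unfolding grid_cube_def by auto
  qed
  have pS: "p \<in> ?S"
  proof -
    have "(real (j t) - 1) / real k \<le> p $ t \<and> p $ t \<le> real (j t) / real k"
      if "j = i \<or> j = i'" for j t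
    proof -
      have "j t \<le> max (i t) (i' t)" "max (i t) (i' t) \<le> j t + 1" using that adj[rule_format, of t] by auto
      then show ?thesis using kp unfolding p_def by (auto simp: divide_simps)
    qed
    thus ?thesis unfolding grid_cube_def by auto
  qed
  define T where "T = (+) (- p) ` ?S"
  have aff: "aff_dim ?S = int (dim T)" unfolding T_def
    by (rule aff_dim_eq_dim[OF hull_inc[OF pS]])
  define B where "B = (\<lambda>s. axis s (1::real)) ` E"
  have Bsub: "B \<subseteq> span T"
  proof
    fix b assume "b \<in> B"
    then obtain s where s: "s \<in> E" "b = axis s 1" unfolding B_def by auto
    have "(1 / real k) *\<^sub>R axis s 1 \<in> T" unfolding T_def
      using inS[OF s(1)] by (force intro: image_eqI[where x="p + (1 / real k) *\<^sub>R axis s 1"])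
    hence "real k *\<^sub>R ((1 / real k) *\<^sub>R axis s (1::real)) \<in> span T"
      by (intro span_mul span_base) 
    thus "b \<in> span T" using s kp by simp
  qed
  have indB: "independent B"
  proof (rule independent_mono[OF independent_Basis])
    show "B \<subseteq> Basis" unfolding B_def Basis_vec_def by auto
  qed
  have cardB: "card B = card E" unfolding B_def
    by (rule card_image) (auto simp: inj_on_def axis_eq_axis)
  have "card B \<le> dim (span T)" by (rule independent_card_le_dim[OF Bsub indB])
  hence "card E \<le> dim T" using cardB by (simp add: dim_span)
  thus ?thesis using aff E_def by simp
qed


theorem mainTheorem6:
  fixes F :: "(real^'n::finite) set \<Rightarrow> (nat \<Rightarrow> int)" and k :: nat and m :: int
  assumes "0 \<le> m" and "m \<le> int CARD('n) - 1"
    and "\<forall>K\<in>grid_cubes k. \<forall>K'\<in>grid_cubes k. aff_dim (K \<inter> K') \<ge> m \<longrightarrow>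
           (\<forall>j < CARD('n) - 1. \<bar>F K' j - F K j\<bar> \<le> 1)"
  shows "\<forall>K\<in>grid_cubes k. \<forall>K'\<in>grid_cubes k. K \<inter> K' \<noteq> {} \<longrightarrow>
           (\<forall>j < CARD('n) - 1. \<bar>F K' j - F K j\<bar> \<le> m + 1)"
proof (intro ballI impI allI)
  fix K K' :: "(real^'n) set" and j :: nat assume KK: "K \<in> grid_cubes k" "K' \<in> grid_cubes k" "K \<inter> K' \<noteq> {}" and j: "j < CARD('n) - 1"
  define V where "V = (\<lambda>i::'n \<Rightarrow> nat. \<forall>s. 1 \<le> i s \<and> i s \<le> k)"
  obtain i i' :: "'n \<Rightarrow> nat" where ii: "K = grid_cube k i" "K' = grid_cube k i'" "V i" "V i'"
    using KK(1,2) unfolding grid_cubes_def V_def by blast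
  have k: "k \<ge> 1" using ii(3) unfolding V_def by (meson order_trans)
  define n where "n = CARD('n)"
  define a where "a = nat m"
  have an: "a \<le> n - 1" "n \<ge> 1" using assms(1,2) unfolding a_def n_def by auto
  define g where "g = (\<lambda>i. F (grid_cube k i) j)"
  have cardsum: "card {s. i s = i' s} + card {s. i s \<noteq> i' s} = n" for i i' :: "'n \<Rightarrow> nat"
  proof -
    have "card ({s. i s = i' s} \<union> {s. i s \<noteq> i' s}) = card {s. i s = i' s} + card {s. i s \<noteq> i' s}"
      by (rule card_Un_disjoint) auto
    moreover have "{s. i s = i' s} \<union> {s. i s \<noteq> i' s} = UNIV" by auto
    ultimately show ?thesis unfolding n_def by simp
  qed
  have step: "\<bar>g i' - g i\<bar> \<le> 1" if "V i" "V i'" "\<forall>s. i' s \<le> i s + 1 \<and> i s \<le> i' s + 1"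
      "card {s. i s \<noteq> i' s} \<le> n - a" for i i'
  proof -
    have "card {s. i s = i' s} \<ge> a" using cardsum[of i i'] that(4) an by linarith
    hence "aff_dim (grid_cube k i \<inter> grid_cube k i') \<ge> m"
      using cube_affdim[OF k that(3)] assms(1) unfolding a_def by linarith
    moreover have "grid_cube k i \<in> grid_cubes k" "grid_cube k i' \<in> grid_cubes k"
      using that(1,2) unfolding grid_cubes_def V_def by auto
    ultimately show ?thesis using assms(3) j unfolding g_def by blast
  qed
  have Vmix: "V (\<lambda>s. if s \<in> G then i' s else i s)" if "V i" "V i'" for i i' G
    using that unfolding V_def by auto
  have adj: "\<forall>s. i' s \<le> i s + 1 \<and> i s \<le> i' s + 1"
    using cube_adj[OF k] KK(3) ii(1,2) by blast
  have "(a + 1) * (n - a) = (n - a) + a * (n - a)" by simp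
  moreover have "a * (n - a) \<ge> a * 1" using an by (intro mult_le_mono2) linarith
  ultimately have big: "n \<le> (a + 1) * (n - a)" using an by linarith
  have "card {s. i s \<noteq> i' s} \<le> n" using cardsum[of i i'] by linarith
  hence "card {s. i s \<noteq> i' s} \<le> (a + 1) * (n - a)" using big by linarith
  note c = this
  have N1: "n - a \<ge> 1" using an by linarith
  have "\<bar>g i' - g i\<bar> \<le> int a + 1"
  proof (rule chain[where V=V and g=g and N="n - a" and t=a])
  qed (fact step N1 Vmix ii(3) ii(4) adj c)+
  thus "\<bar>F K' j - F K j\<bar> \<le> m + 1" using ii(1,2) assms(1) unfolding g_def a_def by simp
qed

end
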